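(* Let $a,b,c\in\mathbb{R}$ with $ac>0$ and $b^2-4ac>0$. Let $\{P_m(z)\}_{m\geq 0}$ be the sequence of functions of $z$ generated by \[ \sum_{m=0}^\infty P_m(z)\, t^m=\frac{1}{(at^2+bt+c)(1-tz)}. \] Then for every $m\geq 0$, no zero of $P_m(z)$ lies in the closed disk $\{z\in\mathbb{C}: |z|\leq 1/|\alpha|\}$, where $\alpha$ is the zero of $at^2+bt+c$ of smallest modulus.
   Context: A sequence $\{P_m(z)\}$ is generated by $f(t,z)$ if, for each $z\in\mathbb{C}$, $f(t,z)$ is analytic in $t$ in a neighborhood of $t=0$ and $P_m(z)$ is the coefficient of $t^m$ in the power series expansion of $f(t,z)$ in $t$ about $0$. *)

theory Defs
  imports "HOL-Analysis.Analysis"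
begin

definition generated_by ::
  "(complex \<Rightarrow> complex \<Rightarrow> complex) \<Rightarrow> (nat \<Rightarrow> complex \<Rightarrow> complex) \<Rightarrow> bool" where
  "generated_by f P \<longleftrightarrow>
     (\<forall>z. (\<lambda>t. f t z) analytic_on {0} \<and>
          (\<forall>m. P m z = (deriv ^^ m) (\<lambda>t. f t z) 0 / fact m))"

end

theory Submission imports Defs "HOL-Analysis.Analysis" begin

lemma geo_fps: "(1 - fps_const (r::'a::comm_ring_1) * fps_X) * Abs_fps (\<lambda>n. r^n) = 1"
proof (rule fps_ext)
  fix n show "fps_nth ((1 - fps_const r * fps_X) * Abs_fps (\<lambda>n. r^n)) n = fps_nth (1::'a fps) n"
    by (cases n) (simp_all add: ring_distribs mult.assoc fps_X_mult_nth)
qed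

lemma EK_id:
  fixes A :: "nat \<Rightarrow> real" and w :: complex
  shows "(1 - w) * (\<Sum>j\<le>m. of_real (A j) * w^j) = of_real (A 0)
     - (\<Sum>j<m. of_real (A j - A (Suc j)) * w^(Suc j)) - of_real (A m) * w^(Suc m)"
  by (induction m) (simp_all add: algebra_simps)

lemma EK_mono:
  fixes A :: "nat \<Rightarrow> real"
  assumes dec: "\<And>j. j < m \<Longrightarrow> A (Suc j) < A j"
  shows "A m \<le> A (m - k)"
proof (induction k)
  case (Suc k)
  show ?case
  proof (cases "k < m")
    case True
    then have "A (m - k) < A (m - Suc k)" using dec[of "m - Suc k"]
      by (simp add: Suc_diff_Suc)
    then show ?thesis using Suc by simp
  next
    case False then show ?thesis using Suc by simp
  qed
qed simp

lemma EK:
  fixes A :: "nat \<Rightarrow> real" and w :: complex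
  assumes dec: "\<And>j. j < m \<Longrightarrow> A (Suc j) < A j" and pos: "A m > 0" and w: "cmod w \<le> 1"
  shows "(\<Sum>j\<le>m. of_real (A j) * w^j) \<noteq> 0"
proof
  assume p0: "(\<Sum>j\<le>m. of_real (A j) * w^j) = 0"
  have Apos: "A j > 0" if "j \<le> m" for j
  proof -
    have "A m \<le> A (m - (m - j))" by (rule EK_mono) (rule dec)
    then show ?thesis using pos that by simp
  qed
  show False
  proof (cases "w = 1")
    case True
    have "Re (\<Sum>j\<le>m. of_real (A j) * w^j) = (\<Sum>j\<le>m. A j)" using True by simp
    also have "\<dots> > 0" using Apos by (intro sum_pos) auto
    finally show False using p0 by simp
  next
    case False
    have rew: "Re w < 1"
    proof (rule ccontr)
      assume "\<not> Re w < 1"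
      then have "Re w \<ge> 1" by simp
      moreover have "Re w \<le> 1" using complex_Re_le_cmod[of w] w by linarith
      ultimately have "Re w = 1" by simp
      moreover have "(Re w)^2 + (Im w)^2 \<le> 1" using w
        by (metis cmod_power2 power_le_one_iff norm_ge_zero)
      ultimately have "Im w = 0" by simp
      with \<open>Re w = 1\<close> have "w = 1" by (simp add: complex_eq_iff)
      with False show False by simp
    qed
    have rep: "Re (w^k) \<le> 1" for k
      using complex_Re_le_cmod[of "w^k"] w by (metis norm_power power_le_one norm_ge_zero order_trans)
    show False
    proof (cases "m = 0")
      case True then show False using p0 pos by simp
    next
      case mpos: False
      have eq: "of_real (A 0) = (\<Sum>j<m. of_real (A j - A (Suc j)) * w^(Suc j)) + of_real (A m) * w^(Suc m)"
        using EK_id[of w A m] p0 by (simp add: algebra_simps)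
      have "A 0 = (\<Sum>j<m. (A j - A (Suc j)) * Re (w^(Suc j))) + A m * Re (w^(Suc m))"
        using arg_cong[OF eq, of Re] by (simp add: Re_sum)
      also have "(\<Sum>j<m. (A j - A (Suc j)) * Re (w^(Suc j))) < (\<Sum>j<m. (A j - A (Suc j)))"
      proof (rule sum_strict_mono_ex1)
        show "\<forall>x\<in>{..<m}. (A x - A (Suc x)) * Re (w ^ Suc x) \<le> A x - A (Suc x)"
        proof
          fix x assume "x \<in> {..<m}"
          then have "0 \<le> A x - A (Suc x)" using dec[of x] by simp
          then show "(A x - A (Suc x)) * Re (w ^ Suc x) \<le> A x - A (Suc x)"
            using rep[of "Suc x"] mult_left_le by blast
        qed
        show "\<exists>x\<in>{..<m}. (A x - A (Suc x)) * Re (w ^ Suc x) < A x - A (Suc x)"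
          using mpos dec[of 0] rew by (intro bexI[of _ 0]) (auto simp del: power_Suc)
      qed simp
      also have "A m * Re (w^(Suc m)) \<le> A m" using pos rep[of "Suc m"] mult_left_le by (metis less_imp_le)
      finally show False by (simp add: sum_lessThan_telescope')
    qed
  qed
qed

lemma rescale_nz:
  fixes rr \<sigma> :: real and z :: complex
  assumes r0: "rr \<noteq> 0" and s0: "0 < \<sigma>" and s1: "\<sigma> < 1" and zr: "cmod z \<le> \<bar>rr\<bar>"
  shows "(\<Sum>i=0..m. z^i * (\<Sum>j=0..m-i. of_real (rr*\<sigma>)^j * of_real rr^(m-i-j))) \<noteq> 0"
proof -
  define w where "w = z / of_real rr"
  define A where "A i = (\<Sum>j\<le>m-i. \<sigma>^j)" for i
  have zw: "z = of_real rr * w" using r0 by (simp add: w_def)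
  have wle: "cmod w \<le> 1" using zr r0 by (simp add: w_def norm_divide divide_le_eq_1)
  have trm: "z^i * (\<Sum>j=0..m-i. of_real (rr*\<sigma>)^j * of_real rr^(m-i-j))
      = of_real rr ^ m * (of_real (A i) * w^i)" if "i \<le> m" for i
  proof -
    have "(\<Sum>j=0..m-i. of_real (rr*\<sigma>)^j * of_real rr^(m-i-j))
        = (\<Sum>j=0..m-i. (of_real rr :: complex)^(m-i) * of_real \<sigma> ^ j)"
    proof (rule sum.cong)
      fix j assume "j \<in> {0..m-i}"
      then have "j + (m-i-j) = m - i" by simp
      then have "(of_real rr :: complex)^(m-i) = of_real rr ^ j * of_real rr ^ (m-i-j)"
        by (metis power_add)
      then show "of_real (rr*\<sigma>)^j * of_real rr^(m-i-j) = (of_real rr :: complex)^(m-i) * of_real \<sigma> ^ j"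
        by (simp add: power_mult_distrib)
    qed simp
    also have "\<dots> = of_real rr^(m-i) * of_real (A i)"
      by (simp add: A_def sum_distrib_left atLeast0AtMost)
    finally have "z^i * (\<Sum>j=0..m-i. of_real (rr*\<sigma>)^j * of_real rr^(m-i-j))
       = (of_real rr ^ i * of_real rr^(m-i)) * (of_real (A i) * w^i)"
      by (simp add: zw power_mult_distrib)
    also have "(of_real rr ^ i * of_real rr^(m-i) :: complex) = of_real rr ^ m"
      using that by (metis power_add le_add_diff_inverse)
    finally show ?thesis .
  qed
  have "(\<Sum>i=0..m. z^i * (\<Sum>j=0..m-i. of_real (rr*\<sigma>)^j * of_real rr^(m-i-j)))
      = (\<Sum>i=0..m. of_real rr ^ m * (of_real (A i) * w^i))"
    using trm by (intro sum.cong) auto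
  also have "\<dots> = of_real rr ^ m * (\<Sum>i\<le>m. of_real (A i) * w^i)"
    by (simp add: sum_distrib_left atLeast0AtMost)
  also have "\<dots> \<noteq> 0"
  proof -
    have "(\<Sum>i\<le>m. of_real (A i) * w^i) \<noteq> 0"
    proof (rule EK[OF _ _ wle])
      fix j assume "j < m"
      then have "m - j = Suc (m - Suc j)" by simp
      then have "A j = A (Suc j) + \<sigma>^(m-j)" unfolding A_def by simp
      then show "A (Suc j) < A j" using s0 by simp
    next
      show "0 < A m" by (simp add: A_def)
    qed
    then show ?thesis using r0 by simp
  qed
  finally show ?thesis .
qed

theorem theorem2:
  fixes a b c :: real and P :: "nat \<Rightarrow> complex \<Rightarrow> complex" and \<alpha> :: real
  assumes "a * c > 0" and "b^2 - 4 * a * c > 0"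
    and "generated_by
           (\<lambda>t z. 1 / ((of_real a * t^2 + of_real b * t + of_real c) * (1 - t * z))) P"
    and "a * \<alpha>^2 + b * \<alpha> + c = 0"
    and "\<forall>\<beta>::complex. of_real a * \<beta>^2 + of_real b * \<beta> + of_real c = 0 \<longrightarrow> \<bar>\<alpha>\<bar> \<le> cmod \<beta>"
  shows "\<forall>m z. cmod z \<le> 1 / \<bar>\<alpha>\<bar> \<longrightarrow> P m z \<noteq> 0"
proof (intro allI impI)
  fix m z assume zle: "cmod z \<le> 1 / \<bar>\<alpha>\<bar>"
  have a0: "a \<noteq> 0" and c0: "c \<noteq> 0" using assms(1) by auto
  have al0: "\<alpha> \<noteq> 0" using assms(4) c0 by auto
  define \<beta> where "\<beta> = c / (a * \<alpha>)"
  have be0: "\<beta> \<noteq> 0" using a0 c0 al0 by (simp add: \<beta>_def)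
  have beq: "a * \<beta>^2 + b * \<beta> + c = 0"
  proof -
    have "a * \<beta>^2 + b * \<beta> + c = c / (a * \<alpha>^2) * (a * \<alpha>^2 + b * \<alpha> + c)"
      using a0 al0 by (simp add: \<beta>_def field_simps power2_eq_square)
    then show ?thesis using assms(4) by simp
  qed
  have sumr: "a * (\<alpha> + \<beta>) = - b"
  proof -
    have "a * (\<alpha> + \<beta>) = (a * \<alpha>^2 + c) / \<alpha>"
      using a0 al0 by (simp add: \<beta>_def field_simps power2_eq_square)
    also have "a * \<alpha>^2 + c = - b * \<alpha>" using assms(4) by simp
    finally show ?thesis using al0 by simp
  qed
  have prodr: "a * (\<alpha> * \<beta>) = c" using a0 al0 by (simp add: \<beta>_def)
  have neq: "\<alpha> \<noteq> \<beta>"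
  proof
    assume e: "\<alpha> = \<beta>"
    then have "b = -2 * a * \<alpha>" using sumr by simp
    then have "b^2 = 4 * a * (a * (\<alpha> * \<beta>))" using e by (simp add: power2_eq_square)
    then show False using prodr assms(2) by simp
  qed
  have pos: "\<alpha> * \<beta> > 0"
  proof -
    have "a * a * (\<alpha> * \<beta>) = a * c" using prodr by (simp add: mult.assoc)
    then have "a * a * (\<alpha> * \<beta>) > 0" using assms(1) by linarith
    then show ?thesis using a0 by (simp add: zero_less_mult_iff)
  qed
  have "of_real a * (of_real \<beta>)^2 + of_real b * of_real \<beta> + of_real c = (0::complex)"
    using arg_cong[OF beq, of "of_real :: real \<Rightarrow> complex"] by simp
  then have ab: "\<bar>\<alpha>\<bar> \<le> \<bar>\<beta>\<bar>" using assms(5) by (metis norm_of_real)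
  have ablt: "\<bar>\<alpha>\<bar> < \<bar>\<beta>\<bar>"
  proof (rule ccontr)
    assume "\<not> ?thesis" then have "\<bar>\<alpha>\<bar> = \<bar>\<beta>\<bar>" using ab by simp
    then have "\<alpha> = \<beta> \<or> \<alpha> = - \<beta>" by (simp add: abs_eq_iff)
    then show False using neq pos by (auto simp: mult_less_0_iff)
  qed
  define \<sigma> where "\<sigma> = \<alpha> / \<beta>"
  define rr where "rr = 1 / \<alpha>"
  have s0: "0 < \<sigma>" using pos be0 by (simp add: \<sigma>_def zero_less_divide_iff zero_less_mult_iff)
  have s1: "\<sigma> < 1"
  proof -
    have "\<sigma> = \<bar>\<alpha>\<bar> / \<bar>\<beta>\<bar>" using s0 unfolding \<sigma>_def by (metis abs_divide abs_of_pos)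
    then show ?thesis using ablt be0 by simp
  qed
  have r0: "rr \<noteq> 0" using al0 by (simp add: rr_def)
  have zr: "cmod z \<le> \<bar>rr\<bar>" using zle by (simp add: rr_def)
  have ss: "rr * \<sigma> = 1 / \<beta>" using al0 be0 by (simp add: rr_def \<sigma>_def)
  have h1: "c * (rr + rr * \<sigma>) = - b"
  proof -
    have "c * (rr + rr * \<sigma>) = c * (1/\<alpha> + 1/\<beta>)" using ss by (simp add: rr_def)
    also have "\<dots> = a * (\<alpha> + \<beta>)" using al0 be0 by (simp add: prodr[symmetric] field_simps)
    finally show ?thesis using sumr by simp
  qed
  have h2: "c * (rr * (rr * \<sigma>)) = a"
  proof -
    have "c * (rr * (rr * \<sigma>)) = c * (1/\<alpha> * (1/\<beta>))" using ss by (simp add: rr_def)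
    also have "\<dots> = a" using al0 be0 by (simp add: prodr[symmetric] field_simps)
    finally show ?thesis .
  qed
  define f where "f = (\<lambda>t::complex. inverse (of_real c * ((1 - of_real rr * t) *
       ((1 - of_real (rr * \<sigma>) * t) * (1 - z * t)))))"
  define G where "G = fps_const (of_real c) * ((1 - fps_const (of_real rr) * fps_X) *
       ((1 - fps_const (of_real (rr * \<sigma>)) * fps_X) * (1 - fps_const z * fps_X)))"
  define E where "E = fps_const (of_real (1 / c)) * (Abs_fps (\<lambda>n. z^n) *
       (Abs_fps (\<lambda>n. of_real (rr * \<sigma>)^n) * Abs_fps (\<lambda>n. of_real rr ^ n)))"
  have fexp: "f has_fps_expansion inverse G"
    unfolding f_def G_def
    by (intro fps_expansion_intros) (use c0 in simp)
  have GE: "G * E = 1"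
  proof -
    have "G * E = (fps_const (of_real c) * fps_const (of_real (1 / c))) *
       (((1 - fps_const (of_real rr) * fps_X) * Abs_fps (\<lambda>n. of_real rr ^ n)) *
        ((1 - fps_const (of_real (rr * \<sigma>)) * fps_X) * Abs_fps (\<lambda>n. of_real (rr * \<sigma>)^n)) *
        ((1 - fps_const z * fps_X) * Abs_fps (\<lambda>n. z^n)))"
      unfolding G_def E_def by (simp only: mult_ac)
    also have "\<dots> = 1" unfolding geo_fps using c0
      by (simp flip: fps_const_mult)
    finally show ?thesis .
  qed
  have fun_eq: "(\<lambda>t. 1 / ((of_real a * t^2 + of_real b * t + of_real c) * (1 - t * z))) = f"
  proof
    fix t :: complex
    have "of_real c * ((1 - of_real rr * t) * (1 - of_real (rr * \<sigma>) * t))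
        = of_real c - of_real (c * (rr + rr * \<sigma>)) * t + of_real (c * (rr * (rr * \<sigma>))) * t^2"
      by (simp add: algebra_simps power2_eq_square)
    also have "\<dots> = of_real a * t^2 + of_real b * t + of_real c" unfolding h1 h2 by simp
    finally have fac: "of_real c * ((1 - of_real rr * t) * (1 - of_real (rr * \<sigma>) * t))
        = of_real a * t^2 + of_real b * t + of_real c" .
    show "1 / ((of_real a * t^2 + of_real b * t + of_real c) * (1 - t * z)) = f t"
      unfolding f_def fac[symmetric] by (simp add: inverse_eq_divide algebra_simps)
  qed
  have "P m z = (deriv ^^ m) f 0 / fact m"
  proof -
    have "P m z = (deriv ^^ m) (\<lambda>t. 1 / ((of_real a * t^2 + of_real b * t + of_real c) * (1 - t * z))) 0 / fact m"
      using assms(3) unfolding generated_by_def by blast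
    then show ?thesis unfolding fun_eq .
  qed
  also have "\<dots> = fps_nth (inverse G) m" using fps_nth_fps_expansion[OF fexp] by simp
  also have "inverse G = E" using fps_inverse_unique[OF GE] .
  also have "fps_nth E m = of_real (1 / c) * (\<Sum>i=0..m. z^i * (\<Sum>j=0..m-i. of_real (rr*\<sigma>)^j * of_real rr^(m-i-j)))"
    unfolding E_def fps_mult_left_const_nth by (simp add: fps_mult_nth)
  also have "\<dots> \<noteq> 0" using rescale_nz[OF r0 s0 s1 zr] c0 by simp
  finally show "P m z \<noteq> 0" .
qed

end
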